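(* For every ${\bm\theta}\in\mathbb R^N$, $$P_{\cal B}P_{{\cal C}({\bm\theta})}=P_{\cal B}P_{{\cal C}(\bar{\bm\theta})}\quad\text{on } L^2(D),$$ where $\bar{\bm\theta}$ is the orthogonal projection of ${\bm\theta}$ onto $\mathrm{ran}(H)$ with respect to the inner product $\langle\cdot,\cdot\rangle_N$.
   Context: $D=\mathbb R$ or $[0,T]$ ($T$ an odd positive integer); $L^2(D)$ is the real Hilbert space with $\langle u,v\rangle=\int_D uv\,dt$. ${\cal B}$ is the closed subspace of signals bandlimited to $[-\pi,\pi]$ and $P_{\cal B}$ the orthogonal projection onto it (sinc / Dirichlet-kernel filtering). Fix $\alpha\ge0$, $N\ge1$, instants $0=t_0<t_1<\dots<t_N$ in $D$, and $h_n(t)=e^{-\alpha(t_n-t)}\mathbf 1_{[t_{n-1},t_n)}(t)$, $n=1,\dots,N$. For ${\bm\theta}\in\mathbb R^N$, ${\cal C}({\bm\theta})=\{u\in L^2(D):\langle h_n,u\rangle=\theta_n\ \forall n\}$ and $P_{{\cal C}({\bm\theta})}$ is the orthogonal projection onto this closed affine subspace. $H:{\cal B}\to\mathbb R^N$ is the linear "sampling operator" $Hu=(\langle h_n,u\rangle)_{n=1}^N$. On $\mathbb R^N$ use the weighted inner product $\langle{\mathbf u},{\mathbf v}\rangle_N=\sum_{n=1}^N u_nv_n/\|h_n\|^2$. *)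

theory Defs
  imports "HOL-Analysis.Analysis"
begin

text \<open>Signals are real functions; L2(D) is represented by square-integrable
  representatives, with equality understood almost everywhere on D.\<close>

definition L2 :: "real set \<Rightarrow> (real \<Rightarrow> real) set" where
  "L2 D = {f. f \<in> borel_measurable (lebesgue_on D) \<and>
               integrable (lebesgue_on D) (\<lambda>t. (f t)\<^sup>2)}"

definition ip :: "real set \<Rightarrow> (real \<Rightarrow> real) \<Rightarrow> (real \<Rightarrow> real) \<Rightarrow> real" where
  "ip D f g = integral\<^sup>L (lebesgue_on D) (\<lambda>t. f t * g t)"

definition nrm :: "real set \<Rightarrow> (real \<Rightarrow> real) \<Rightarrow> real" where
  "nrm D f = sqrt (ip D f f)"

definition is_proj :: "real set \<Rightarrow> (real \<Rightarrow> real) set \<Rightarrow> (real \<Rightarrow> real) \<Rightarrow> (real \<Rightarrow> real) \<Rightarrow> bool" where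
  "is_proj D K u p \<longleftrightarrow> p \<in> K \<and> (\<forall>q\<in>K. nrm D (\<lambda>t. u t - p t) \<le> nrm D (\<lambda>t. u t - q t))"

text \<open>Signals bandlimited to [-pi,pi]: on the real line the Paley--Wiener space
  (inverse Fourier transforms of L2 functions supported in [-pi,pi]); on [0,T], T odd,
  the trigonometric polynomials of period T with frequencies 2 pi k / T <= pi.\<close>
definition bandlimited :: "real set \<Rightarrow> (real \<Rightarrow> real) set" where
  "bandlimited D = {f. f \<in> L2 D \<and>
     (if D = UNIV then
        (\<exists>F :: real \<Rightarrow> complex.
           set_integrable lborel {-pi..pi} (\<lambda>\<omega>. (cmod (F \<omega>))\<^sup>2) \<and>
           set_integrable lborel {-pi..pi} F \<and>
           (AE t in lebesgue. complex_of_real (f t) =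
              (LINT \<omega>:{-pi..pi}|lborel. F \<omega> * exp (\<i> * complex_of_real (\<omega> * t)))))
      else
        (\<exists>T::nat. D = {0..real T} \<and>
          (\<exists>a b :: nat \<Rightarrow> real. AE t in lebesgue_on D.
             f t = (\<Sum>k\<le>T div 2. a k * cos (2 * pi * real k * t / real T)
                                  + b k * sin (2 * pi * real k * t / real T)))))}"

definition hfun :: "real \<Rightarrow> (nat \<Rightarrow> real) \<Rightarrow> nat \<Rightarrow> real \<Rightarrow> real" where
  "hfun \<alpha> tt n t = (if tt (n - 1) \<le> t \<and> t < tt n then exp (- \<alpha> * (tt n - t)) else 0)"

definition Cset :: "real set \<Rightarrow> real \<Rightarrow> (nat \<Rightarrow> real) \<Rightarrow> nat \<Rightarrow> (nat \<Rightarrow> real) \<Rightarrow> (real \<Rightarrow> real) set" where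
  "Cset D \<alpha> tt N \<theta> = {u \<in> L2 D. \<forall>n\<in>{1..N}. ip D (hfun \<alpha> tt n) u = \<theta> n}"

text \<open>Range of the sampling operator H on the bandlimited space (entries outside 1..N are 0).\<close>
definition ranH :: "real set \<Rightarrow> real \<Rightarrow> (nat \<Rightarrow> real) \<Rightarrow> nat \<Rightarrow> (nat \<Rightarrow> real) set" where
  "ranH D \<alpha> tt N = {v. \<exists>u\<in>bandlimited D.
       \<forall>n. v n = (if n \<in> {1..N} then ip D (hfun \<alpha> tt n) u else 0)}"

definition wnorm2 :: "real set \<Rightarrow> real \<Rightarrow> (nat \<Rightarrow> real) \<Rightarrow> nat \<Rightarrow> (nat \<Rightarrow> real) \<Rightarrow> real" where
  "wnorm2 D \<alpha> tt N v = (\<Sum>n=1..N. (v n)\<^sup>2 / (nrm D (hfun \<alpha> tt n))\<^sup>2)"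

end

theory Submission
  imports Defs
begin


lemma L2_prod_int:
  assumes "f \<in> L2 D" "g \<in> L2 D"
  shows "integrable (lebesgue_on D) (\<lambda>t. f t * g t)"
proof -
  have i: "integrable (lebesgue_on D) (\<lambda>t. (f t)\<^sup>2 + (g t)\<^sup>2)"
    using assms unfolding L2_def by auto
  have m: "(\<lambda>t. f t * g t) \<in> borel_measurable (lebesgue_on D)"
    using assms unfolding L2_def by auto
  have "AE t in lebesgue_on D. norm (f t * g t) \<le> norm ((f t)\<^sup>2 + (g t)\<^sup>2)"
  proof (rule AE_I2)
    fix t
    have "2 * \<bar>f t\<bar> * \<bar>g t\<bar> \<le> (f t)\<^sup>2 + (g t)\<^sup>2"
      using sum_squares_bound[of "\<bar>f t\<bar>" "\<bar>g t\<bar>"] by simp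
    moreover have "norm (f t * g t) = \<bar>f t\<bar> * \<bar>g t\<bar>" by (simp add: abs_mult)
    moreover have "norm ((f t)\<^sup>2 + (g t)\<^sup>2) = (f t)\<^sup>2 + (g t)\<^sup>2" by simp
    moreover have "0 \<le> \<bar>f t\<bar> * \<bar>g t\<bar>" by simp
    ultimately show "norm (f t * g t) \<le> norm ((f t)\<^sup>2 + (g t)\<^sup>2)" by linarith
  qed
  then show ?thesis using Bochner_Integration.integrable_bound[OF i m] by blast
qed

lemma L2_comb:
  assumes "f \<in> L2 D" "g \<in> L2 D"
  shows "(\<lambda>t. a * f t + b * g t) \<in> L2 D"
proof -
  have m: "(\<lambda>t. a * f t + b * g t) \<in> borel_measurable (lebesgue_on D)"
    using assms unfolding L2_def by auto
  have "integrable (lebesgue_on D) (\<lambda>t. (a * f t + b * g t)\<^sup>2)"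
  proof -
    have i: "integrable (lebesgue_on D) (\<lambda>t. 2 * a\<^sup>2 * (f t)\<^sup>2 + 2 * b\<^sup>2 * (g t)\<^sup>2)"
      using assms unfolding L2_def by auto
    have m2: "(\<lambda>t. (a * f t + b * g t)\<^sup>2) \<in> borel_measurable (lebesgue_on D)"
      using m by auto
    have "AE t in lebesgue_on D. norm ((a * f t + b * g t)\<^sup>2) \<le> norm (2 * a\<^sup>2 * (f t)\<^sup>2 + 2 * b\<^sup>2 * (g t)\<^sup>2)"
    proof (rule AE_I2)
      fix t
      have "(a * f t + b * g t)\<^sup>2 \<le> 2 * a\<^sup>2 * (f t)\<^sup>2 + 2 * b\<^sup>2 * (g t)\<^sup>2"
        using sum_squares_bound[of "a*f t" "b*g t"] by (simp add: power2_sum power_mult_distrib)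
      moreover have "0 \<le> 2 * a\<^sup>2 * (f t)\<^sup>2 + 2 * b\<^sup>2 * (g t)\<^sup>2" by simp
      ultimately show "norm ((a * f t + b * g t)\<^sup>2) \<le> norm (2 * a\<^sup>2 * (f t)\<^sup>2 + 2 * b\<^sup>2 * (g t)\<^sup>2)"
        by simp
    qed
    then show ?thesis using Bochner_Integration.integrable_bound[OF i m2] by blast
  qed
  then show ?thesis using m unfolding L2_def by auto
qed

lemma L2_diff: "f \<in> L2 D \<Longrightarrow> g \<in> L2 D \<Longrightarrow> (\<lambda>t. f t - g t) \<in> L2 D"
  using L2_comb[of f D g 1 "-1"] by simp
lemma L2_add: "f \<in> L2 D \<Longrightarrow> g \<in> L2 D \<Longrightarrow> (\<lambda>t. f t + g t) \<in> L2 D"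
  using L2_comb[of f D g 1 1] by simp
lemma L2_addscale: "f \<in> L2 D \<Longrightarrow> g \<in> L2 D \<Longrightarrow> (\<lambda>t. f t + s * g t) \<in> L2 D"
  using L2_comb[of f D g 1 s] by simp
lemma L2_scale: "f \<in> L2 D \<Longrightarrow> (\<lambda>t. s * f t) \<in> L2 D"
  using L2_comb[of f D f s 0] by simp
lemma L2_zero: "(\<lambda>t. 0) \<in> L2 D"
  unfolding L2_def by simp

lemma L2_sum: "finite S \<Longrightarrow> (\<And>n. n \<in> S \<Longrightarrow> f n \<in> L2 D) \<Longrightarrow> (\<lambda>t. \<Sum>n\<in>S. f n t) \<in> L2 D"
proof (induction S rule: finite_induct)
  case empty then show ?case by (simp add: L2_zero)
next
  case (insert x F)
  then show ?case using L2_add[of "f x" D "\<lambda>t. \<Sum>n\<in>F. f n t"] by simp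
qed

lemma ip_comm: "ip D f g = ip D g f"
  unfolding ip_def by (simp add: mult.commute)

lemma ip_comb:
  assumes "h \<in> L2 D" "f \<in> L2 D" "g \<in> L2 D"
  shows "ip D h (\<lambda>t. a * f t + b * g t) = a * ip D h f + b * ip D h g"
proof -
  have i1: "integrable (lebesgue_on D) (\<lambda>t. h t * f t)" and i2: "integrable (lebesgue_on D) (\<lambda>t. h t * g t)"
    using assms L2_prod_int by auto
  have "ip D h (\<lambda>t. a * f t + b * g t) = integral\<^sup>L (lebesgue_on D) (\<lambda>t. a * (h t * f t) + b * (h t * g t))"
    unfolding ip_def by (simp add: algebra_simps)
  also have "\<dots> = a * ip D h f + b * ip D h g"
    unfolding ip_def using i1 i2 by simp
  finally show ?thesis .
qed

lemma ip_diff: "h \<in> L2 D \<Longrightarrow> f \<in> L2 D \<Longrightarrow> g \<in> L2 D \<Longrightarrow> ip D h (\<lambda>t. f t - g t) = ip D h f - ip D h g"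
  using ip_comb[of h D f g 1 "-1"] by simp
lemma ip_addscale: "h \<in> L2 D \<Longrightarrow> f \<in> L2 D \<Longrightarrow> g \<in> L2 D \<Longrightarrow> ip D h (\<lambda>t. f t + s * g t) = ip D h f + s * ip D h g"
  using ip_comb[of h D f g 1 s] by simp
lemma ip_diff1: "h \<in> L2 D \<Longrightarrow> f \<in> L2 D \<Longrightarrow> g \<in> L2 D \<Longrightarrow> ip D (\<lambda>t. f t - g t) h = ip D f h - ip D g h"
  using ip_diff[of h D f g] by (simp add: ip_comm)

lemma ip_sum:
  assumes "finite S" "h \<in> L2 D" "\<And>n. n \<in> S \<Longrightarrow> f n \<in> L2 D"
  shows "ip D h (\<lambda>t. \<Sum>n\<in>S. c n * f n t) = (\<Sum>n\<in>S. c n * ip D h (f n))"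
  using assms
proof (induction S rule: finite_induct)
  case empty then show ?case by (simp add: ip_def)
next
  case (insert x F)
  have s: "(\<lambda>t. \<Sum>n\<in>F. c n * f n t) \<in> L2 D"
    using insert L2_sum[of F "\<lambda>n t. c n * f n t"] L2_scale by auto
  have "ip D h (\<lambda>t. \<Sum>n\<in>insert x F. c n * f n t) = ip D h (\<lambda>t. c x * f x t + 1 * (\<Sum>n\<in>F. c n * f n t))"
    using insert by simp
  also have "\<dots> = c x * ip D h (f x) + ip D h (\<lambda>t. \<Sum>n\<in>F. c n * f n t)"
    using ip_comb[OF insert(4) _ s, of "f x" "c x" 1] insert by simp
  finally show ?case using insert by simp
qed

lemma ip_self_nonneg: "0 \<le> ip D f f"
  unfolding ip_def by (simp add: integral_nonneg_AE)

lemma nrm_sq: "(nrm D f)\<^sup>2 = ip D f f"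
  unfolding nrm_def using ip_self_nonneg by simp

lemma ip_self_zero:
  assumes "f \<in> L2 D" "ip D f f = 0"
  shows "AE t in lebesgue_on D. f t = 0"
proof -
  have "integrable (lebesgue_on D) (\<lambda>t. f t * f t)" using L2_prod_int assms by auto
  then have "AE t in lebesgue_on D. f t * f t = 0"
    using integral_nonneg_eq_0_iff_AE[of "lebesgue_on D" "\<lambda>t. f t * f t"] assms(2)
    unfolding ip_def by simp
  then show ?thesis by simp
qed

lemma ip_zero_left:
  assumes "f \<in> L2 D" "ip D f f = 0" "g \<in> L2 D"
  shows "ip D f g = 0"
proof -
  have "AE t in lebesgue_on D. f t * g t = 0" using ip_self_zero[OF assms(1,2)] by eventually_elim simp
  then have "ip D f g = integral\<^sup>L (lebesgue_on D) (\<lambda>t. 0)"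
    unfolding ip_def by (rule integral_cong_AE[rotated 2]) (use assms in \<open>auto simp: L2_def\<close>)
  then show ?thesis by simp
qed

lemma quad:
  fixes A a c :: real
  assumes "\<And>s. A \<le> A - 2 * s * a + s\<^sup>2 * c" "c \<ge> 0"
  shows "a = 0"
proof -
  define s where "s = a / (c + 1)"
  have "0 \<le> - 2 * s * a + s\<^sup>2 * c" using assms(1)[of s] by simp
  then have "0 \<le> (- 2 * s * a + s\<^sup>2 * c) * (c+1)\<^sup>2" using assms(2) by simp
  also have "\<dots> = - 2 * (s * (c+1)) * a * (c+1) + (s * (c+1))\<^sup>2 * c"
    by (simp add: algebra_simps power2_eq_square)
  also have "s * (c+1) = a" unfolding s_def using assms(2) by simp
  also have "- 2 * a * a * (c+1) + a\<^sup>2 * c = - a\<^sup>2 * (c + 2)"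
    by (simp add: algebra_simps power2_eq_square)
  finally have "a\<^sup>2 * (c+2) \<le> 0" by simp
  then have "a\<^sup>2 \<le> 0" using assms(2) by (smt (verit) mult_pos_pos zero_le_power2 zero_less_power2)
  then show ?thesis by simp
qed

lemma proj_orth:
  assumes "u \<in> L2 D" "p \<in> L2 D" "w \<in> L2 D" "is_proj D K u p"
    and "\<And>s. (\<lambda>t. p t + s * w t) \<in> K"
  shows "ip D (\<lambda>t. u t - p t) w = 0"
proof -
  define f where "f = (\<lambda>t. u t - p t)"
  have fL: "f \<in> L2 D" unfolding f_def using assms L2_diff by auto
  have "\<And>s. ip D f f \<le> ip D f f - 2 * s * ip D f w + s\<^sup>2 * ip D w w"
  proof -
    fix s
    have "nrm D f \<le> nrm D (\<lambda>t. u t - (p t + s * w t))"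
      using assms(4) assms(5)[of s] unfolding is_proj_def f_def by simp
    also have "(\<lambda>t. u t - (p t + s * w t)) = (\<lambda>t. 1 * f t + (-s) * w t)"
      unfolding f_def by (auto simp: algebra_simps)
    finally have le: "nrm D f \<le> nrm D (\<lambda>t. 1 * f t + (-s) * w t)" .
    have "ip D f f \<le> ip D (\<lambda>t. 1 * f t + (-s) * w t) (\<lambda>t. 1 * f t + (-s) * w t)"
      using le unfolding nrm_def by (simp add: ip_self_nonneg)
    also have "\<dots> = ip D f f - 2 * s * ip D f w + s\<^sup>2 * ip D w w"
    proof -
      define g where "g = (\<lambda>t. 1 * f t + (-s) * w t)"
      have gL: "g \<in> L2 D" unfolding g_def using L2_comb[OF fL assms(3)] .
      have e1: "ip D g g = 1 * ip D g f + (-s) * ip D g w"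
        unfolding g_def[symmetric] using ip_comb[OF gL fL assms(3), of 1 "-s"] unfolding g_def by simp
      have e2: "ip D f g = 1 * ip D f f + (-s) * ip D f w"
        using ip_comb[OF fL fL assms(3), of 1 "-s"] unfolding g_def by simp
      have e3: "ip D w g = 1 * ip D w f + (-s) * ip D w w"
        using ip_comb[OF assms(3) fL assms(3), of 1 "-s"] unfolding g_def by simp
      have "ip D g g = ip D f f - 2 * s * ip D f w + s\<^sup>2 * ip D w w"
        using e1 e2 e3 ip_comm[of D g f] ip_comm[of D g w] ip_comm[of D w f]
        by (simp add: power2_eq_square algebra_simps)
      then show ?thesis unfolding g_def .
    qed
    finally show "ip D f f \<le> ip D f f - 2 * s * ip D f w + s\<^sup>2 * ip D w w" .
  qed
  then show ?thesis using quad ip_self_nonneg unfolding f_def by blast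
qed




lemma tt_mono:
  assumes "\<And>n. n < N \<Longrightarrow> tt n < (tt (Suc n) :: real)"
  shows "i < j \<Longrightarrow> j \<le> N \<Longrightarrow> tt i < tt j"
proof (induction j)
  case 0 then show ?case by simp
next
  case (Suc j)
  then show ?case using assms[of j] by (cases "i < j") (auto simp: less_Suc_eq)
qed

lemma hfun_eq: "hfun \<alpha> tt n = (\<lambda>t. indicator {tt (n-1)..<tt n} t * exp (- \<alpha> * (tt n - t)))"
  unfolding hfun_def by (auto simp: indicator_def fun_eq_iff)

lemma hfun_meas: "hfun \<alpha> tt n \<in> borel_measurable (lebesgue_on D)"
proof -
  have c: "(\<lambda>t. exp (- \<alpha> * (tt n - t))) \<in> borel_measurable borel"
    by (intro borel_measurable_continuous_onI continuous_intros)
  have i: "(indicator {tt (n-1)..<tt n} :: real \<Rightarrow> real) \<in> borel_measurable borel"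
    by (rule borel_measurable_indicator) simp
  have "hfun \<alpha> tt n \<in> borel_measurable borel" unfolding hfun_eq
    using borel_measurable_times[OF i c] by simp
  then have "hfun \<alpha> tt n \<in> borel_measurable lborel" by simp
  then have "hfun \<alpha> tt n \<in> borel_measurable lebesgue" by (rule measurable_completion)
  then show ?thesis by (rule measurable_restrict_space1)
qed

lemma hfun_L2:
  assumes D: "D \<in> sets lebesgue" and sub: "{tt (n-1)..tt n} \<subseteq> D" and al: "\<alpha> \<ge> 0"
  shows "hfun \<alpha> tt n \<in> L2 D"
proof -
  let ?S = "{tt (n-1)..tt n}"
  have Ss: "?S \<in> sets (lebesgue_on D)"
    using sub D by (simp add: sets_restrict_space_iff)
  have "emeasure (lebesgue_on D) ?S = emeasure lebesgue ?S"
    using sub D by (simp add: emeasure_restrict_space)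
  then have fin: "emeasure (lebesgue_on D) ?S < \<infinity>" by (simp add: emeasure_lborel_Icc_eq)
  have i: "integrable (lebesgue_on D) (indicator ?S :: real \<Rightarrow> real)"
    using Ss fin by simp
  have m: "(\<lambda>t. (hfun \<alpha> tt n t)\<^sup>2) \<in> borel_measurable (lebesgue_on D)"
    using hfun_meas[of \<alpha> tt n D] by (rule borel_measurable_power)
  have "AE t in lebesgue_on D. norm ((hfun \<alpha> tt n t)\<^sup>2) \<le> norm (indicator ?S t :: real)"
  proof (rule AE_I2)
    fix t
    show "norm ((hfun \<alpha> tt n t)\<^sup>2) \<le> norm (indicator ?S t :: real)"
    proof (cases "tt (n - 1) \<le> t \<and> t < tt n")
      case True
      have "exp (- \<alpha> * (tt n - t)) \<le> 1" using True al by (simp add: mult_nonneg_nonneg)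
      then have "(exp (- \<alpha> * (tt n - t)))\<^sup>2 \<le> 1"
        by (simp add: power_le_one)
      then show ?thesis using True unfolding hfun_def by (simp add: indicator_def)
    next
      case False then show ?thesis unfolding hfun_def by auto
    qed
  qed
  then have "integrable (lebesgue_on D) (\<lambda>t. (hfun \<alpha> tt n t)\<^sup>2)"
    using Bochner_Integration.integrable_bound[OF i m] by blast
  then show ?thesis unfolding L2_def using hfun_meas by auto
qed

lemma hfun_orth:
  assumes "\<And>n. n < N \<Longrightarrow> tt n < (tt (Suc n) :: real)" "m \<in> {1..N}" "n \<in> {1..N}" "m \<noteq> n"
  shows "ip D (hfun \<alpha> tt m) (hfun \<alpha> tt n) = 0"
proof -
  have "\<And>t. hfun \<alpha> tt m t * hfun \<alpha> tt n t = 0"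
  proof -
    fix t
    have mono: "\<And>i j. i \<le> j \<Longrightarrow> j \<le> N \<Longrightarrow> tt i \<le> tt j"
      using tt_mono[of N tt, OF assms(1)] by (metis le_less order.refl)
    show "hfun \<alpha> tt m t * hfun \<alpha> tt n t = 0"
    proof (cases "m < n")
      case True
      then have "tt m \<le> tt (n - 1)" using mono assms by auto
      then show ?thesis unfolding hfun_def by auto
    next
      case False
      then have "tt n \<le> tt (m - 1)" using mono assms by auto
      then show ?thesis unfolding hfun_def by auto
    qed
  qed
  then have z: "(\<lambda>t. hfun \<alpha> tt m t * hfun \<alpha> tt n t) = (\<lambda>t. 0)" by auto
  show ?thesis unfolding ip_def z by simp
qed




lemma exp_meas: "(\<lambda>\<omega>::real. exp (\<i> * complex_of_real (\<omega> * t))) \<in> borel_measurable lborel"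
proof -
  have "(\<lambda>\<omega>::real. exp (\<i> * complex_of_real (\<omega> * t))) \<in> borel_measurable borel"
    by (intro borel_measurable_continuous_onI continuous_intros)
  then show ?thesis by simp
qed

lemma set_int_exp:
  assumes "set_integrable lborel A (F :: real \<Rightarrow> complex)"
  shows "set_integrable lborel A (\<lambda>\<omega>. F \<omega> * exp (\<i> * complex_of_real (\<omega> * t)))"
proof -
  have i: "integrable lborel (\<lambda>\<omega>. indicator A \<omega> *\<^sub>R F \<omega>)"
    using assms unfolding set_integrable_def .
  have m1: "(\<lambda>\<omega>. indicator A \<omega> *\<^sub>R F \<omega>) \<in> borel_measurable lborel"
    using i by (rule borel_measurable_integrable)
  have m: "(\<lambda>\<omega>. indicator A \<omega> *\<^sub>R (F \<omega> * exp (\<i> * complex_of_real (\<omega> * t)))) \<in> borel_measurable lborel"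
  proof -
    have "(\<lambda>\<omega>. (indicator A \<omega> *\<^sub>R F \<omega>) * exp (\<i> * complex_of_real (\<omega> * t))) \<in> borel_measurable lborel"
      using borel_measurable_times[OF m1 exp_meas] .
    moreover have "(\<lambda>\<omega>. (indicator A \<omega> *\<^sub>R F \<omega>) * exp (\<i> * complex_of_real (\<omega> * t)))
        = (\<lambda>\<omega>. indicator A \<omega> *\<^sub>R (F \<omega> * exp (\<i> * complex_of_real (\<omega> * t))))"
      by (simp add: fun_eq_iff)
    ultimately show ?thesis by simp
  qed
  have "AE \<omega> in lborel. norm (indicator A \<omega> *\<^sub>R (F \<omega> * exp (\<i> * complex_of_real (\<omega> * t))))
      \<le> norm (indicator A \<omega> *\<^sub>R F \<omega>)"
  proof (rule AE_I2)
    fix \<omega>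
    have "norm (exp (\<i> * complex_of_real (\<omega> * t))) = 1" by (simp add: norm_exp_i_times)
    then show "norm (indicator A \<omega> *\<^sub>R (F \<omega> * exp (\<i> * complex_of_real (\<omega> * t))))
      \<le> norm (indicator A \<omega> *\<^sub>R F \<omega>)" by (simp add: norm_mult)
  qed
  then show ?thesis unfolding set_integrable_def
    using Bochner_Integration.integrable_bound[OF i m] by blast
qed

lemma set_int_sq_comb:
  assumes F: "set_integrable lborel A (F :: real \<Rightarrow> complex)" and G: "set_integrable lborel A G"
    and F2: "set_integrable lborel A (\<lambda>\<omega>. (cmod (F \<omega>))\<^sup>2)"
    and G2: "set_integrable lborel A (\<lambda>\<omega>. (cmod (G \<omega>))\<^sup>2)"
  shows "set_integrable lborel A (\<lambda>\<omega>. (cmod (F \<omega> + complex_of_real s * G \<omega>))\<^sup>2)"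
proof -
  let ?H = "\<lambda>\<omega>. F \<omega> + complex_of_real s * G \<omega>"
  have H: "set_integrable lborel A ?H" using F G by (intro set_integral_add(1)) auto
  have m1: "(\<lambda>\<omega>. indicator A \<omega> *\<^sub>R ?H \<omega>) \<in> borel_measurable lborel"
    using H unfolding set_integrable_def by (rule borel_measurable_integrable)
  have m: "(\<lambda>\<omega>. indicator A \<omega> *\<^sub>R (cmod (?H \<omega>))\<^sup>2) \<in> borel_measurable lborel"
  proof -
    have "(\<lambda>\<omega>. (cmod (indicator A \<omega> *\<^sub>R ?H \<omega>))\<^sup>2) \<in> borel_measurable lborel"
      using m1 by measurable
    moreover have "(\<lambda>\<omega>. (cmod (indicator A \<omega> *\<^sub>R ?H \<omega>))\<^sup>2) = (\<lambda>\<omega>. indicator A \<omega> *\<^sub>R (cmod (?H \<omega>))\<^sup>2)"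
      by (auto simp: fun_eq_iff indicator_def)
    ultimately show ?thesis by simp
  qed
  have i: "integrable lborel (\<lambda>\<omega>. 2 * (indicator A \<omega> *\<^sub>R (cmod (F \<omega>))\<^sup>2) + 2 * s\<^sup>2 * (indicator A \<omega> *\<^sub>R (cmod (G \<omega>))\<^sup>2))"
    using F2 G2 unfolding set_integrable_def by auto
  have "AE \<omega> in lborel. norm (indicator A \<omega> *\<^sub>R (cmod (?H \<omega>))\<^sup>2)
     \<le> norm (2 * (indicator A \<omega> *\<^sub>R (cmod (F \<omega>))\<^sup>2) + 2 * s\<^sup>2 * (indicator A \<omega> *\<^sub>R (cmod (G \<omega>))\<^sup>2))"
  proof (rule AE_I2)
    fix \<omega>
    have "cmod (?H \<omega>) \<le> cmod (F \<omega>) + \<bar>s\<bar> * cmod (G \<omega>)"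
      using norm_triangle_ineq[of "F \<omega>" "complex_of_real s * G \<omega>"] by (simp add: norm_mult)
    then have "(cmod (?H \<omega>))\<^sup>2 \<le> (cmod (F \<omega>) + \<bar>s\<bar> * cmod (G \<omega>))\<^sup>2"
      by (simp add: power_mono)
    also have "\<dots> \<le> 2 * (cmod (F \<omega>))\<^sup>2 + 2 * s\<^sup>2 * (cmod (G \<omega>))\<^sup>2"
      using sum_squares_bound[of "cmod (F \<omega>)" "\<bar>s\<bar> * cmod (G \<omega>)"]
      by (simp add: power2_sum power_mult_distrib)
    finally have le: "(cmod (?H \<omega>))\<^sup>2 \<le> 2 * (cmod (F \<omega>))\<^sup>2 + 2 * s\<^sup>2 * (cmod (G \<omega>))\<^sup>2" .
    show "norm (indicator A \<omega> *\<^sub>R (cmod (?H \<omega>))\<^sup>2)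
     \<le> norm (2 * (indicator A \<omega> *\<^sub>R (cmod (F \<omega>))\<^sup>2) + 2 * s\<^sup>2 * (indicator A \<omega> *\<^sub>R (cmod (G \<omega>))\<^sup>2))"
      using le by (simp add: indicator_def)
  qed
  then show ?thesis unfolding set_integrable_def
    using Bochner_Integration.integrable_bound[OF i m] by blast
qed

lemma band_comb:
  assumes f: "f \<in> bandlimited D" and g: "g \<in> bandlimited D"
  shows "(\<lambda>t. f t + s * g t) \<in> bandlimited D"
proof -
  have fL: "f \<in> L2 D" and gL: "g \<in> L2 D" using f g unfolding bandlimited_def by auto
  have L: "(\<lambda>t. f t + s * g t) \<in> L2 D" using L2_addscale[OF fL gL] .
  show ?thesis
  proof (cases "D = UNIV")
    case True
    obtain F where F2: "set_integrable lborel {-pi..pi} (\<lambda>\<omega>. (cmod (F \<omega>))\<^sup>2)"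
      and F: "set_integrable lborel {-pi..pi} F"
      and Fae: "AE t in lebesgue. complex_of_real (f t) =
              (LINT \<omega>:{-pi..pi}|lborel. F \<omega> * exp (\<i> * complex_of_real (\<omega> * t)))"
      using f True unfolding bandlimited_def by auto
    obtain G where G2: "set_integrable lborel {-pi..pi} (\<lambda>\<omega>. (cmod (G \<omega>))\<^sup>2)"
      and G: "set_integrable lborel {-pi..pi} G"
      and Gae: "AE t in lebesgue. complex_of_real (g t) =
              (LINT \<omega>:{-pi..pi}|lborel. G \<omega> * exp (\<i> * complex_of_real (\<omega> * t)))"
      using g True unfolding bandlimited_def by auto
    define H where "H = (\<lambda>\<omega>. F \<omega> + complex_of_real s * G \<omega>)"
    have H2: "set_integrable lborel {-pi..pi} (\<lambda>\<omega>. (cmod (H \<omega>))\<^sup>2)"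
      unfolding H_def using set_int_sq_comb[OF F G F2 G2] .
    have H: "set_integrable lborel {-pi..pi} H"
      unfolding H_def using F G by (intro set_integral_add(1)) auto
    have Hae: "AE t in lebesgue. complex_of_real (f t + s * g t) =
              (LINT \<omega>:{-pi..pi}|lborel. H \<omega> * exp (\<i> * complex_of_real (\<omega> * t)))"
      using Fae Gae
    proof eventually_elim
      case (elim t)
      have e: "\<And>\<omega>. H \<omega> * exp (\<i> * complex_of_real (\<omega> * t)) =
          F \<omega> * exp (\<i> * complex_of_real (\<omega> * t)) + complex_of_real s * (G \<omega> * exp (\<i> * complex_of_real (\<omega> * t)))"
        unfolding H_def by (simp add: algebra_simps)
      have "(LINT \<omega>:{-pi..pi}|lborel. H \<omega> * exp (\<i> * complex_of_real (\<omega> * t)))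
         = (LINT \<omega>:{-pi..pi}|lborel. F \<omega> * exp (\<i> * complex_of_real (\<omega> * t)))
           + (LINT \<omega>:{-pi..pi}|lborel. complex_of_real s * (G \<omega> * exp (\<i> * complex_of_real (\<omega> * t))))"
        unfolding e using set_int_exp[OF F, of t] set_int_exp[OF G, of t]
        by (intro set_integral_add(2)) auto
      also have "\<dots> = complex_of_real (f t) + complex_of_real s * complex_of_real (g t)"
        using elim by simp
      finally show ?case by simp
    qed
    show ?thesis unfolding bandlimited_def using True L H2 H Hae by auto
  next
    case False
    obtain T a b where T: "D = {0..real T}" and ae: "AE t in lebesgue_on D.
             f t = (\<Sum>k\<le>T div 2. a k * cos (2 * pi * real k * t / real T)
                                  + b k * sin (2 * pi * real k * t / real T))"
      using f False unfolding bandlimited_def by auto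
    obtain T' a' b' where T': "D = {0..real T'}" and ae': "AE t in lebesgue_on D.
             g t = (\<Sum>k\<le>T' div 2. a' k * cos (2 * pi * real k * t / real T')
                                  + b' k * sin (2 * pi * real k * t / real T'))"
      using g False unfolding bandlimited_def by auto
    have "real T = real T'"
    proof -
      have "real T \<in> {0..real T'}" "real T' \<in> {0..real T}" using T T' by auto
      then show ?thesis by auto
    qed
    then have TT: "T' = T" by simp
    have AEc: "AE t in lebesgue_on D.
             f t + s * g t = (\<Sum>k\<le>T div 2. (a k + s * a' k) * cos (2 * pi * real k * t / real T)
                                  + (b k + s * b' k) * sin (2 * pi * real k * t / real T))"
      using ae ae' unfolding TT
    proof eventually_elim
      case (elim t)
      then show ?case by (simp add: sum.distrib sum_distrib_left algebra_simps)
    qed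
    have "\<exists>aa bb :: nat \<Rightarrow> real. AE t in lebesgue_on D.
             f t + s * g t = (\<Sum>k\<le>T div 2. aa k * cos (2 * pi * real k * t / real T)
                                  + bb k * sin (2 * pi * real k * t / real T))"
      using AEc by (intro exI[of _ "\<lambda>k. a k + s * a' k"] exI[of _ "\<lambda>k. b k + s * b' k"])
    then show ?thesis unfolding bandlimited_def using False L T by auto
  qed
qed

lemma band_L2: "f \<in> bandlimited D \<Longrightarrow> f \<in> L2 D"
  unfolding bandlimited_def by auto

lemma band_diff: "f \<in> bandlimited D \<Longrightarrow> g \<in> bandlimited D \<Longrightarrow> (\<lambda>t. f t - g t) \<in> bandlimited D"
  using band_comb[of f D g "-1"] by simp




theorem proposition1:
  fixes D :: "real set" and \<alpha> :: real and N :: nat and tt :: "nat \<Rightarrow> real"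
    and \<theta> \<theta>bar :: "nat \<Rightarrow> real"
  assumes hD: "D = UNIV \<or> (\<exists>T::nat. odd T \<and> D = {0..real T})"
    and h\<alpha>: "\<alpha> \<ge> 0" and hN: "N \<ge> 1"
    and ht0: "tt 0 = 0"
    and htmono: "\<And>n. n < N \<Longrightarrow> tt n < tt (Suc n)"
    and htD: "\<And>n. n \<le> N \<Longrightarrow> tt n \<in> D"
    and hbar: "\<theta>bar \<in> ranH D \<alpha> tt N \<and>
       (\<forall>v\<in>ranH D \<alpha> tt N. wnorm2 D \<alpha> tt N (\<lambda>n. \<theta> n - \<theta>bar n)
                            \<le> wnorm2 D \<alpha> tt N (\<lambda>n. \<theta> n - v n))"
  shows "\<forall>u\<in>L2 D. \<forall>p1 q1 p2 q2.
           is_proj D (Cset D \<alpha> tt N \<theta>) u p1 \<longrightarrow> is_proj D (bandlimited D) p1 q1 \<longrightarrow>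
           is_proj D (Cset D \<alpha> tt N \<theta>bar) u p2 \<longrightarrow> is_proj D (bandlimited D) p2 q2 \<longrightarrow>
           (AE t in lebesgue_on D. q1 t = q2 t)"
proof (intro ballI allI impI)
  fix u p1 q1 p2 q2
  assume uL: "u \<in> L2 D"
    and P1: "is_proj D (Cset D \<alpha> tt N \<theta>) u p1" and Q1: "is_proj D (bandlimited D) p1 q1"
    and P2: "is_proj D (Cset D \<alpha> tt N \<theta>bar) u p2" and Q2: "is_proj D (bandlimited D) p2 q2"
  define h where "h = hfun \<alpha> tt"
  define wt where "wt n = 1 / (nrm D (h n))\<^sup>2" for n
  define d where "d n = \<theta> n - \<theta>bar n" for n
  define K where "K = {w \<in> L2 D. \<forall>n\<in>{1..N}. ip D (h n) w = 0}"
  have Dm: "D \<in> sets lebesgue" using hD by auto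
  have sub: "{tt (n-1)..tt n} \<subseteq> D" if "n \<in> {1..N}" for n
  proof (cases "D = UNIV")
    case False
    then obtain T :: nat where T: "D = {0..real T}" using hD by auto
    have "tt (n-1) \<in> D" "tt n \<in> D" using htD that by auto
    then show ?thesis using T by auto
  qed simp
  have hL: "h n \<in> L2 D" if "n \<in> {1..N}" for n
    unfolding h_def using hfun_L2[OF Dm sub[OF that] h\<alpha>] .
  have horth: "ip D (h m) (h n) = 0" if "m \<in> {1..N}" "n \<in> {1..N}" "m \<noteq> n" for m n
    unfolding h_def using hfun_orth[of N tt m n D \<alpha>] htmono that by blast
  have p1C: "p1 \<in> Cset D \<alpha> tt N \<theta>" using P1 unfolding is_proj_def by auto
  have p2C: "p2 \<in> Cset D \<alpha> tt N \<theta>bar" using P2 unfolding is_proj_def by auto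
  have p1L: "p1 \<in> L2 D" and p1h: "\<And>n. n \<in> {1..N} \<Longrightarrow> ip D (h n) p1 = \<theta> n"
    using p1C unfolding Cset_def h_def by auto
  have p2L: "p2 \<in> L2 D" and p2h: "\<And>n. n \<in> {1..N} \<Longrightarrow> ip D (h n) p2 = \<theta>bar n"
    using p2C unfolding Cset_def h_def by auto
  have q1B: "q1 \<in> bandlimited D" using Q1 unfolding is_proj_def by auto
  have q2B: "q2 \<in> bandlimited D" using Q2 unfolding is_proj_def by auto
  have q1L: "q1 \<in> L2 D" and q2L: "q2 \<in> L2 D" using q1B q2B band_L2 by auto

  have orthC: "ip D (\<lambda>t. u t - p t) w = 0"
    if pL: "p \<in> L2 D" and ph: "\<And>n. n \<in> {1..N} \<Longrightarrow> ip D (h n) p = \<theta>' n"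
      and P: "is_proj D (Cset D \<alpha> tt N \<theta>') u p" and wK: "w \<in> K" for p \<theta>' w
  proof -
    have wL: "w \<in> L2 D" using wK unfolding K_def by auto
    show ?thesis
    proof (rule proj_orth[OF uL pL wL P])
      fix s
      show "(\<lambda>t. p t + s * w t) \<in> Cset D \<alpha> tt N \<theta>'"
        unfolding Cset_def
      proof (intro CollectI conjI ballI)
        show "(\<lambda>t. p t + s * w t) \<in> L2 D" using L2_addscale[OF pL wL] .
        fix n assume n: "n \<in> {1..N}"
        have "ip D (h n) (\<lambda>t. p t + s * w t) = ip D (h n) p + s * ip D (h n) w"
          using ip_addscale[OF hL[OF n] pL wL] .
        also have "\<dots> = \<theta>' n" using ph[OF n] wK n unfolding K_def by auto
        finally show "ip D (hfun \<alpha> tt n) (\<lambda>t. p t + s * w t) = \<theta>' n" unfolding h_def .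
      qed
    qed
  qed
  have orthB: "ip D (\<lambda>t. p t - q t) b = 0"
    if pL: "p \<in> L2 D" and Q: "is_proj D (bandlimited D) p q" and bB: "b \<in> bandlimited D" for p q b
  proof -
    have qB: "q \<in> bandlimited D" using Q unfolding is_proj_def by auto
    show ?thesis
      using proj_orth[OF pL band_L2[OF qB] band_L2[OF bB] Q] band_comb[OF qB bB] by blast
  qed

  have step3: "ip D (\<lambda>t. p1 t - p2 t) b = (\<Sum>n\<in>{1..N}. (ip D (h n) b * wt n) * d n)"
    if bL: "b \<in> L2 D" for b
  proof -
    define c where "c n = ip D (h n) b * wt n" for n
    define S where "S = (\<lambda>t. \<Sum>n\<in>{1..N}. c n * h n t)"
    have SL: "S \<in> L2 D" unfolding S_def
    proof (rule L2_sum)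
      fix n :: nat assume "n \<in> {1..N}"
      then show "(\<lambda>t. c n * h n t) \<in> L2 D" using L2_scale[OF hL] by blast
    qed simp
    define b' where "b' = (\<lambda>t. b t - S t)"
    have b'L: "b' \<in> L2 D" unfolding b'_def using L2_diff[OF bL SL] .
    have b'K: "b' \<in> K" unfolding K_def
    proof (intro CollectI conjI ballI b'L)
      fix m assume m: "m \<in> {1..N}"
      have "ip D (h m) b' = ip D (h m) b - ip D (h m) S"
        unfolding b'_def using ip_diff[OF hL[OF m] bL SL] .
      also have "ip D (h m) S = (\<Sum>n\<in>{1..N}. c n * ip D (h m) (h n))"
        unfolding S_def using ip_sum[of "{1..N}" "h m" D h c] hL[OF m] hL by auto
      also have "\<dots> = c m * ip D (h m) (h m) + (\<Sum>n\<in>{1..N} - {m}. c n * ip D (h m) (h n))"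
        using sum.remove[of "{1..N}" m "\<lambda>n. c n * ip D (h m) (h n)"] m by simp
      also have "(\<Sum>n\<in>{1..N} - {m}. c n * ip D (h m) (h n)) = 0"
        using horth[OF m] by (intro sum.neutral) auto
      also have "c m * ip D (h m) (h m) = ip D (h m) b"
      proof (cases "ip D (h m) (h m) = 0")
        case True
        then show ?thesis using ip_zero_left[OF hL[OF m] True bL] by simp
      next
        case False
        then have "wt m * ip D (h m) (h m) = 1" unfolding wt_def nrm_sq by simp
        then show ?thesis unfolding c_def by (metis mult.assoc mult.right_neutral)
      qed
      finally show "ip D (h m) b' = 0" by simp
    qed
    have u1: "(\<lambda>t. u t - p1 t) \<in> L2 D" and u2: "(\<lambda>t. u t - p2 t) \<in> L2 D"
      using L2_diff uL p1L p2L by auto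
    have pp: "(\<lambda>t. p1 t - p2 t) \<in> L2 D" using L2_diff p1L p2L by auto
    have "ip D (\<lambda>t. p1 t - p2 t) b' = ip D (\<lambda>t. (u t - p2 t) - (u t - p1 t)) b'" by simp
    also have "\<dots> = ip D (\<lambda>t. u t - p2 t) b' - ip D (\<lambda>t. u t - p1 t) b'"
      using ip_diff1[OF b'L u2 u1] .
    also have "\<dots> = 0" using orthC[OF p1L p1h P1 b'K] orthC[OF p2L p2h P2 b'K] by simp
    finally have z: "ip D (\<lambda>t. p1 t - p2 t) b' = 0" .
    have "ip D (\<lambda>t. p1 t - p2 t) b' = ip D (\<lambda>t. p1 t - p2 t) b - ip D (\<lambda>t. p1 t - p2 t) S"
      unfolding b'_def using ip_diff[OF pp bL SL] .
    also have "ip D (\<lambda>t. p1 t - p2 t) S = (\<Sum>n\<in>{1..N}. c n * ip D (\<lambda>t. p1 t - p2 t) (h n))"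
      unfolding S_def using ip_sum[of "{1..N}" "\<lambda>t. p1 t - p2 t" D h c] pp hL by auto
    also have "\<dots> = (\<Sum>n\<in>{1..N}. c n * d n)"
    proof (rule sum.cong[OF refl])
      fix n assume n: "n \<in> {1..N}"
      have "ip D (\<lambda>t. p1 t - p2 t) (h n) = ip D (h n) (\<lambda>t. p1 t - p2 t)" by (rule ip_comm)
      also have "\<dots> = d n" using ip_diff[OF hL[OF n] p1L p2L] p1h[OF n] p2h[OF n] unfolding d_def by simp
      finally show "c n * ip D (\<lambda>t. p1 t - p2 t) (h n) = c n * d n" by simp
    qed
    finally show ?thesis using z unfolding c_def by simp
  qed

  have step4: "(\<Sum>n\<in>{1..N}. (ip D (h n) b * wt n) * d n) = 0" if bB: "b \<in> bandlimited D" for b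
  proof -
    have bL: "b \<in> L2 D" using band_L2[OF bB] .
    obtain u0 where u0B: "u0 \<in> bandlimited D"
      and u0: "\<And>n. \<theta>bar n = (if n \<in> {1..N} then ip D (h n) u0 else 0)"
      using hbar unfolding ranH_def h_def by auto
    have u0L: "u0 \<in> L2 D" using band_L2[OF u0B] .
    define e where "e n = ip D (h n) b" for n
    define A where "A = (\<Sum>n=1..N. (d n)\<^sup>2 * wt n)"
    define a where "a = (\<Sum>n\<in>{1..N}. e n * wt n * d n)"
    define c where "c = (\<Sum>n=1..N. (e n)\<^sup>2 * wt n)"
    have wt0: "wt n \<ge> 0" for n unfolding wt_def by simp
    have c0: "c \<ge> 0" unfolding c_def using wt0 by (intro sum_nonneg) auto
    have "A \<le> A - 2 * s * a + s\<^sup>2 * c" for s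
    proof -
      define v where "v n = (if n \<in> {1..N} then ip D (h n) (\<lambda>t. u0 t + s * b t) else 0)" for n
      have "v \<in> ranH D \<alpha> tt N" unfolding ranH_def
        using band_comb[OF u0B bB, of s] unfolding v_def h_def by blast
      then have le: "wnorm2 D \<alpha> tt N (\<lambda>n. \<theta> n - \<theta>bar n) \<le> wnorm2 D \<alpha> tt N (\<lambda>n. \<theta> n - v n)"
        using hbar by blast
      have "wnorm2 D \<alpha> tt N (\<lambda>n. \<theta> n - \<theta>bar n) = A"
        unfolding wnorm2_def A_def d_def wt_def h_def by (simp add: divide_inverse)
      moreover have "wnorm2 D \<alpha> tt N (\<lambda>n. \<theta> n - v n) = A - 2 * s * a + s\<^sup>2 * c"
      proof -
        have "wnorm2 D \<alpha> tt N (\<lambda>n. \<theta> n - v n) =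
            (\<Sum>n=1..N. (d n)\<^sup>2 * wt n - 2 * s * (e n * wt n * d n) + s\<^sup>2 * ((e n)\<^sup>2 * wt n))"
          unfolding wnorm2_def
        proof (rule sum.cong[OF refl])
          fix n assume n: "n \<in> {1..N}"
          have "v n = \<theta>bar n + s * e n"
            using n ip_addscale[OF hL[OF n] u0L bL, of s] u0[of n] unfolding v_def e_def by simp
          then have eq: "\<theta> n - v n = d n - s * e n" unfolding d_def by simp
          show "(\<theta> n - v n)\<^sup>2 / (nrm D (hfun \<alpha> tt n))\<^sup>2 =
              (d n)\<^sup>2 * wt n - 2 * s * (e n * wt n * d n) + s\<^sup>2 * ((e n)\<^sup>2 * wt n)"
            unfolding wt_def h_def eq by (simp add: divide_inverse power2_eq_square algebra_simps)
        qed
        also have "\<dots> = A - 2 * s * a + s\<^sup>2 * c"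
          unfolding A_def a_def c_def
          by (simp add: sum.distrib sum_subtractf sum_distrib_left)
        finally show ?thesis .
      qed
      ultimately show ?thesis using le by simp
    qed
    then have "a = 0" using quad c0 by blast
    then show ?thesis unfolding a_def e_def .
  qed

  define q where "q = (\<lambda>t. q1 t - q2 t)"
  have qB: "q \<in> bandlimited D" unfolding q_def using band_diff[OF q1B q2B] .
  have qL: "q \<in> L2 D" using band_L2[OF qB] .
  define f1 where "f1 = (\<lambda>t. p1 t - p2 t)"
  define f2 where "f2 = (\<lambda>t. p1 t - q1 t)"
  define f3 where "f3 = (\<lambda>t. p2 t - q2 t)"
  have f1L: "f1 \<in> L2 D" unfolding f1_def using L2_diff p1L p2L by auto
  have f2L: "f2 \<in> L2 D" unfolding f2_def using L2_diff p1L q1L by auto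
  have f3L: "f3 \<in> L2 D" unfolding f3_def using L2_diff p2L q2L by auto
  have f12L: "(\<lambda>t. f1 t - f2 t) \<in> L2 D" using L2_diff[OF f1L f2L] .
  have qeq: "q = (\<lambda>t. (f1 t - f2 t) + 1 * f3 t)"
    unfolding q_def f1_def f2_def f3_def by (auto simp: fun_eq_iff)
  have "ip D q q = ip D q (\<lambda>t. (f1 t - f2 t) + 1 * f3 t)" using qeq by simp
  also have "\<dots> = ip D q (\<lambda>t. f1 t - f2 t) + 1 * ip D q f3"
    using ip_addscale[OF qL f12L f3L] .
  also have "ip D q (\<lambda>t. f1 t - f2 t) = ip D q f1 - ip D q f2" using ip_diff[OF qL f1L f2L] .
  also have "ip D q f1 = 0"
    using ip_comm[of D q f1] step3[OF qL] step4[OF qB] unfolding f1_def by simp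
  also have "ip D q f2 = 0"
    using ip_comm[of D q f2] orthB[OF p1L Q1 qB] unfolding f2_def by simp
  also have "ip D q f3 = 0"
    using ip_comm[of D q f3] orthB[OF p2L Q2 qB] unfolding f3_def by simp
  finally have "ip D q q = 0" by simp
  then have "AE t in lebesgue_on D. q t = 0" using ip_self_zero[OF qL] by simp
  then show "AE t in lebesgue_on D. q1 t = q2 t" unfolding q_def by eventually_elim simp
qed


end
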